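(* Let $F$ be a field, $P\in F[t]$ a monic irreducible polynomial of degree $d\ge1$, and $G_1,G_2,G_3\in F[t]$ polynomials not divisible by $P$. Then $$\{x_P(G_1,G_2)\}_2-\{x_P(G_1G_3,G_2)\}_2-\{x_P(G_1,G_3)\}_2+\{x_P(G_1G_2,G_3)\}_2\in B_{d-1}(F(t)).$$
   Context: For a field $K$, $K^*$ means $K^*\otimes\mathbb{Q}$, exterior powers over $\mathbb{Q}$. $B_2(K)=\mathbb{Q}[\mathbb{P}^1(K)]/R_2(K)$, with basis symbols $\{x\}_2$ ($x\in\mathbb{P}^1(K)$) modulo the span of $\{0\}_2,\{\infty\}_2$ and $\sum_{i=1}^5(-1)^i\{r(x_1,\dots,\hat x_i,\dots,x_5)\}_2$ (pairwise distinct $x_j$, $r(a,b,c,d)=\frac{(a-b)(c-d)}{(c-b)(a-d)}$); $\delta_2(\{x\}_2)=x\wedge(1-x)\in\bigwedge^2K^*$. $V_e\subset F(t)^*\otimes\mathbb{Q}$ is the span of nonzero polynomials of degree $\le e$; $B_e(F(t))=\{y\in B_2(F(t)):\delta_2(y)\in\bigwedge^2V_e\}$. For a polynomial $G$ not divisible by $P$, let $\overline G$ be its remainder modulo $P$ (degree $<d$). For $G,H$ not divisible by $P$, $x_P(G,H):=\overline G\,\overline H/\overline{GH}\in F(t)^*$. *)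

theory Defs
  imports "HOL-Computational_Algebra.Polynomial" "HOL-Computational_Algebra.Fraction_Field"
          "HOL-Computational_Algebra.Polynomial_Factorial"
begin

type_synonym 'a ratfun = "'a poly fract"

inductive_set qspan :: "('b \<Rightarrow> rat) set \<Rightarrow> ('b \<Rightarrow> rat) set" for S where
  zero: "(\<lambda>_. 0) \<in> qspan S"
| base: "v \<in> S \<Longrightarrow> v \<in> qspan S"
| add: "v \<in> qspan S \<Longrightarrow> w \<in> qspan S \<Longrightarrow> (\<lambda>z. v z + w z) \<in> qspan S"
| scale: "v \<in> qspan S \<Longrightarrow> (\<lambda>z. c * v z) \<in> qspan S"

definition vadd :: "('b \<Rightarrow> rat) \<Rightarrow> ('b \<Rightarrow> rat) \<Rightarrow> 'b \<Rightarrow> rat" where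
  "vadd v w = (\<lambda>z. v z + w z)"
definition vsub :: "('b \<Rightarrow> rat) \<Rightarrow> ('b \<Rightarrow> rat) \<Rightarrow> 'b \<Rightarrow> rat" where
  "vsub v w = (\<lambda>z. v z - w z)"

text \<open>Free Q-vector space on pairs of elements of K: formal generator a \<and> b.\<close>
definition wedge :: "'k \<Rightarrow> 'k \<Rightarrow> ('k \<times> 'k \<Rightarrow> rat)" where
  "wedge a b = (\<lambda>z. if z = (a, b) then 1 else 0)"

text \<open>Relations whose quotient of the free Q-vector space on K^* x K^* is
  (\<And>^2_Z K^*) \<otimes> Q = \<And>^2_Q (K^* \<otimes> Q).\<close>
definition wedge_rels :: "('k::field \<times> 'k \<Rightarrow> rat) set" where
  "wedge_rels =
     {vsub (vsub (wedge (a * b) c) (wedge a c)) (wedge b c) | a b c. a \<noteq> 0 \<and> b \<noteq> 0 \<and> c \<noteq> 0}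
   \<union> {vsub (vsub (wedge a (b * c)) (wedge a b)) (wedge a c) | a b c. a \<noteq> 0 \<and> b \<noteq> 0 \<and> c \<noteq> 0}
   \<union> {wedge a a | a. a \<noteq> 0}"

text \<open>A formal combination \<omega> of wedges of nonzero elements represents an element of
  \<And>^2 V_e iff it lies in the span of the relations together with the wedges p \<and> q
  of nonzero polynomials of degree \<le> e.\<close>
definition in_wedge2_V :: "nat \<Rightarrow> ('a::field ratfun \<times> 'a ratfun \<Rightarrow> rat) \<Rightarrow> bool" where
  "in_wedge2_V e \<omega> \<longleftrightarrow>
     \<omega> \<in> qspan (wedge_rels \<union>
        {wedge (to_fract p) (to_fract q) | p q. p \<noteq> 0 \<and> q \<noteq> 0 \<and> degree p \<le> e \<and> degree q \<le> e})"

text \<open>Elements of Q[P^1(K)]: finitely supported functions on K option (None = \<infinity>).\<close>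
definition symb :: "'k \<Rightarrow> ('k option \<Rightarrow> rat)" where
  "symb x = (\<lambda>z. if z = Some x then 1 else 0)"

definition delta2_symb :: "'k::field option \<Rightarrow> ('k \<times> 'k \<Rightarrow> rat)" where
  "delta2_symb x = (case x of None \<Rightarrow> (\<lambda>_. 0)
      | Some y \<Rightarrow> (if y = 0 \<or> y = 1 then (\<lambda>_. 0) else wedge y (1 - y)))"

definition delta2 :: "('k::field option \<Rightarrow> rat) \<Rightarrow> ('k \<times> 'k \<Rightarrow> rat)" where
  "delta2 Y = (\<lambda>z. \<Sum>x\<in>{x. Y x \<noteq> 0}. Y x * delta2_symb x z)"

text \<open>Y (a representative in Q[P^1(F(t))]) has class in B_e(F(t)).\<close>
definition in_B :: "nat \<Rightarrow> ('a::field ratfun option \<Rightarrow> rat) \<Rightarrow> bool" where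
  "in_B e Y \<longleftrightarrow> finite {x. Y x \<noteq> 0} \<and> in_wedge2_V e (delta2 Y)"

definition xP :: "'a::field poly \<Rightarrow> 'a poly \<Rightarrow> 'a poly \<Rightarrow> 'a ratfun" where
  "xP P G H = to_fract (G mod P) * to_fract (H mod P) / to_fract ((G * H) mod P)"

end

theory Submission
  imports Defs "HOL-Library.Function_Algebras"
begin

lemma qs_add: "v \<in> qspan A \<Longrightarrow> w \<in> qspan A \<Longrightarrow> v + w \<in> qspan A"
  using qspan.add[of v A w] by (simp add: plus_fun_def)

lemma qs_neg: "v \<in> qspan A \<Longrightarrow> - v \<in> qspan A"
  using qspan.scale[of v A "-1"] by (simp add: fun_Compl_def)

lemma qs_diff: "v \<in> qspan A \<Longrightarrow> w \<in> qspan A \<Longrightarrow> v - w \<in> qspan A"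
  unfolding diff_conv_add_uminus by (intro qs_add qs_neg)

lemma qs_zero: "0 \<in> qspan A"
  using qspan.zero[of A] by (simp add: zero_fun_def)

lemma vsub_eq: "vsub v w = v - w" by (simp add: vsub_def fun_eq_iff)
lemma vadd_eq: "vadd v w = v + w" by (simp add: vadd_def fun_eq_iff)

lemma rel_l:
  fixes a b c :: "'k::field"
  assumes "wedge_rels \<subseteq> A" "a \<noteq> 0" "b \<noteq> 0" "c \<noteq> 0"
  shows "wedge (a*b) c - wedge a c - wedge b c \<in> qspan A"
proof -
  have "vsub (vsub (wedge (a * b) c) (wedge a c)) (wedge b c) \<in>
     {vsub (vsub (wedge (a * b) c) (wedge a c)) (wedge b c) | a b c. a \<noteq> 0 \<and> b \<noteq> 0 \<and> c \<noteq> 0}"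
    using assms(2-4) by blast
  then have "vsub (vsub (wedge (a * b) c) (wedge a c)) (wedge b c) \<in> wedge_rels"
    unfolding wedge_rels_def by (rule UnI1[THEN UnI1])
  from qspan.base[OF subsetD[OF assms(1) this]] show ?thesis by (simp only: vsub_eq)
qed

lemma rel_r:
  fixes a b c :: "'k::field"
  assumes "wedge_rels \<subseteq> A" "a \<noteq> 0" "b \<noteq> 0" "c \<noteq> 0"
  shows "wedge a (b*c) - wedge a b - wedge a c \<in> qspan A"
proof -
  have "vsub (vsub (wedge a (b * c)) (wedge a b)) (wedge a c) \<in>
     {vsub (vsub (wedge a (b * c)) (wedge a b)) (wedge a c) | a b c. a \<noteq> 0 \<and> b \<noteq> 0 \<and> c \<noteq> 0}"
    using assms(2-4) by blast
  then have "vsub (vsub (wedge a (b * c)) (wedge a b)) (wedge a c) \<in> wedge_rels"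
    unfolding wedge_rels_def by (rule UnI2[THEN UnI1])
  from qspan.base[OF subsetD[OF assms(1) this]] show ?thesis by (simp only: vsub_eq)
qed

lemma rel_l3:
  fixes a b c y :: "'k::field"
  assumes "wedge_rels \<subseteq> A" "a \<noteq> 0" "b \<noteq> 0" "c \<noteq> 0" "y \<noteq> 0"
  shows "wedge (a*b/c) y - (wedge a y + wedge b y - wedge c y) \<in> qspan A"
proof -
  have u: "a*b/c \<noteq> 0" "a*b/c*c = a*b" using assms by auto
  have X1: "wedge (a*b) y - wedge (a*b/c) y - wedge c y \<in> qspan A"
    using rel_l[OF assms(1) u(1) assms(4) assms(5)] u(2) by simp
  have X2: "wedge (a*b) y - wedge a y - wedge b y \<in> qspan A"
    using rel_l[OF assms(1) assms(2,3,5)] .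
  have "wedge (a*b/c) y - (wedge a y + wedge b y - wedge c y) =
     (wedge (a*b) y - wedge a y - wedge b y) - (wedge (a*b) y - wedge (a*b/c) y - wedge c y)"
    by (simp add: algebra_simps)
  then show ?thesis using qs_diff[OF X2 X1] by (simp only:)
qed

lemma rel_r3:
  fixes a b c u :: "'k::field"
  assumes "wedge_rels \<subseteq> A" "a \<noteq> 0" "b \<noteq> 0" "c \<noteq> 0" "u \<noteq> 0"
  shows "wedge u (a*b/c) - (wedge u a + wedge u b - wedge u c) \<in> qspan A"
proof -
  have v: "a*b/c \<noteq> 0" "a*b/c*c = a*b" using assms by auto
  have X1: "wedge u (a*b) - wedge u (a*b/c) - wedge u c \<in> qspan A"
    using rel_r[OF assms(1) assms(5) v(1) assms(4)] v(2) by simp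
  have X2: "wedge u (a*b) - wedge u a - wedge u b \<in> qspan A"
    using rel_r[OF assms(1) assms(5) assms(2,3)] .
  have "wedge u (a*b/c) - (wedge u a + wedge u b - wedge u c) =
     (wedge u (a*b) - wedge u a - wedge u b) - (wedge u (a*b) - wedge u (a*b/c) - wedge u c)"
    by (simp add: algebra_simps)
  then show ?thesis using qs_diff[OF X2 X1] by (simp only:)
qed

definition gens :: "nat \<Rightarrow> ('a::field ratfun \<times> 'a ratfun \<Rightarrow> rat) set" where
  "gens e = {wedge (to_fract p) (to_fract q) | p q. p \<noteq> 0 \<and> q \<noteq> 0 \<and> degree p \<le> e \<and> degree q \<le> e}"

lemma gen_in:
  "p \<noteq> 0 \<Longrightarrow> q \<noteq> 0 \<Longrightarrow> degree p \<le> e \<Longrightarrow> degree q \<le> e \<Longrightarrow>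
   wedge (to_fract p) (to_fract q) \<in> qspan (wedge_rels \<union> gens e)"
  unfolding gens_def by (rule qspan.base, rule UnI2, blast)

lemma sym_lemma:
  fixes P G H :: "'a::field poly"
  assumes irr: "irreducible P" and nG: "\<not> P dvd G" and nH: "\<not> P dvd H"
  shows "delta2_symb (Some (xP P G H)) -
     (wedge (to_fract (G mod P)) (to_fract P) + wedge (to_fract (H mod P)) (to_fract P)
      - wedge (to_fract ((G*H) mod P)) (to_fract P)) \<in> qspan (wedge_rels \<union> gens (degree P - 1))"
    (is "_ \<in> qspan ?A")
proof -
  define g where "g = G mod P"
  define h where "h = H mod P"
  define r where "r = (G*H) mod P"
  define q where "q = (g*h) div P"
  have rels: "wedge_rels \<subseteq> ?A" by blast
  have P0: "P \<noteq> 0" using irr by auto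
  have pr: "prime_elem P" using irr by (rule field_poly_irreducible_imp_prime)
  have nGH: "\<not> P dvd G*H" using pr nG nH prime_elem_dvd_mult_iff by blast
  have g0: "g \<noteq> 0" using nG unfolding g_def by (simp add: mod_eq_0_iff_dvd)
  have h0: "h \<noteq> 0" using nH unfolding h_def by (simp add: mod_eq_0_iff_dvd)
  have r0: "r \<noteq> 0" using nGH unfolding r_def by (simp add: mod_eq_0_iff_dvd)
  have dg: "degree g < degree P" using degree_mod_less'[OF P0] g0 g_def by blast
  have dh: "degree h < degree P" using degree_mod_less'[OF P0] h0 h_def by blast
  have dr: "degree r < degree P" using degree_mod_less'[OF P0] r0 r_def by blast
  have rgh: "r = (g*h) mod P" unfolding r_def g_def h_def by (simp add: mod_mult_eq)
  have ghq: "g*h = q*P + r" unfolding q_def rgh by simp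
  define A where "A = to_fract g"
  define B where "B = to_fract h"
  define R where "R = to_fract r"
  define Pf where "Pf = to_fract P"
  have A0: "A \<noteq> 0" and B0: "B \<noteq> 0" and R0: "R \<noteq> 0" and Pf0: "Pf \<noteq> 0"
    using g0 h0 r0 P0 by (auto simp: A_def B_def R_def Pf_def)
  have x: "xP P G H = A * B / R"
    unfolding xP_def A_def B_def R_def g_def h_def r_def by simp
  have e1: "to_fract (G mod P) = A" and e2: "to_fract (H mod P) = B"
    and e3: "to_fract ((G*H) mod P) = R" and e4: "to_fract P = Pf"
    by (simp_all add: A_def B_def R_def Pf_def g_def h_def r_def)
  show ?thesis
  proof (cases "q = 0")
    case True
    then have "g*h = r" using ghq by simp
    then have "R = A * B" unfolding R_def A_def B_def by (metis to_fract_mult)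
    then have "xP P G H = 1" using x R0 by simp
    then have d: "delta2_symb (Some (xP P G H)) = 0" by (simp add: delta2_symb_def zero_fun_def)
    have XX: "wedge (A*B) Pf - wedge A Pf - wedge B Pf \<in> qspan ?A"
      using rel_l[OF rels A0 B0 Pf0] .
    have eqz: "0 - (wedge A Pf + wedge B Pf - wedge R Pf) = wedge (A*B) Pf - wedge A Pf - wedge B Pf"
      unfolding \<open>R = A*B\<close> by (simp add: algebra_simps)
    show ?thesis unfolding d e1 e2 e3 e4 eqz by (rule XX)
  next
    case False
    define Q where "Q = to_fract (-q)"
    have Q0: "Q \<noteq> 0" using False by (simp add: Q_def)
    have "q * P = g*h - r" using ghq by simp
    have "degree (q*P) = degree q + degree P" using False P0 degree_mult_eq by blast
    moreover have "degree (g*h - r) \<le> max (degree (g*h)) (degree r)" by (rule degree_diff_le_max)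
    moreover have "degree (g*h) \<le> degree g + degree h" by (rule degree_mult_le)
    ultimately have dq: "degree (-q) \<le> degree P - 1" using dg dh dr \<open>q * P = g*h - r\<close> by simp
    have omx: "1 - A*B/R = Q*Pf/R"
    proof -
      have "to_fract (r - g*h) = Q * Pf" unfolding Q_def Pf_def using ghq
        by (simp flip: to_fract_mult)
      then have "R - A*B = Q*Pf" by (simp add: R_def A_def B_def)
      then show ?thesis using R0 by (simp add: field_simps)
    qed
    have x1: "A*B/R \<noteq> 1" using omx Q0 Pf0 R0 by auto
    have d: "delta2_symb (Some (xP P G H)) = wedge (A*B/R) (Q*Pf/R)"
      using x x1 A0 B0 R0 omx by (simp add: delta2_symb_def)
    have y0: "Q*Pf/R \<noteq> 0" using Q0 Pf0 R0 by simp
    have X1: "wedge (A*B/R) (Q*Pf/R) - (wedge A (Q*Pf/R) + wedge B (Q*Pf/R) - wedge R (Q*Pf/R)) \<in> qspan ?A"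
      by (rule rel_l3[OF rels A0 B0 R0 y0])
    have X2: "wedge A (Q*Pf/R) - (wedge A Q + wedge A Pf - wedge A R) \<in> qspan ?A"
      by (rule rel_r3[OF rels Q0 Pf0 R0 A0])
    have X3: "wedge B (Q*Pf/R) - (wedge B Q + wedge B Pf - wedge B R) \<in> qspan ?A"
      by (rule rel_r3[OF rels Q0 Pf0 R0 B0])
    have X4: "wedge R (Q*Pf/R) - (wedge R Q + wedge R Pf - wedge R R) \<in> qspan ?A"
      by (rule rel_r3[OF rels Q0 Pf0 R0 R0])
    have e: "degree g \<le> degree P - 1" "degree h \<le> degree P - 1" "degree r \<le> degree P - 1"
      using dg dh dr by auto
    have mq: "-q \<noteq> 0" using False by simp
    have G1: "wedge A Q \<in> qspan ?A" unfolding A_def Q_def by (rule gen_in[OF g0 mq e(1) dq])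
    have G2: "wedge B Q \<in> qspan ?A" unfolding B_def Q_def by (rule gen_in[OF h0 mq e(2) dq])
    have G3: "wedge R Q \<in> qspan ?A" unfolding R_def Q_def by (rule gen_in[OF r0 mq e(3) dq])
    have G4: "wedge A R \<in> qspan ?A" unfolding A_def R_def by (rule gen_in[OF g0 r0 e(1) e(3)])
    have G5: "wedge B R \<in> qspan ?A" unfolding B_def R_def by (rule gen_in[OF h0 r0 e(2) e(3)])
    have G6: "wedge R R \<in> qspan ?A" unfolding R_def by (rule gen_in[OF r0 r0 e(3) e(3)])
    have eq: "wedge (A*B/R) (Q*Pf/R) - (wedge A Pf + wedge B Pf - wedge R Pf) =
      (wedge (A*B/R) (Q*Pf/R) - (wedge A (Q*Pf/R) + wedge B (Q*Pf/R) - wedge R (Q*Pf/R)))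
      + (wedge A (Q*Pf/R) - (wedge A Q + wedge A Pf - wedge A R))
      + (wedge B (Q*Pf/R) - (wedge B Q + wedge B Pf - wedge B R))
      - (wedge R (Q*Pf/R) - (wedge R Q + wedge R Pf - wedge R R))
      + wedge A Q - wedge A R + wedge B Q - wedge B R - wedge R Q + wedge R R"
      by (simp add: algebra_simps)
    have "wedge (A*B/R) (Q*Pf/R) - (wedge A Pf + wedge B Pf - wedge R Pf) \<in> qspan ?A"
      unfolding eq
      by (rule qs_add[OF qs_diff[OF qs_diff[OF qs_add[OF qs_diff[OF qs_add[OF qs_diff[OF
           qs_add[OF qs_add[OF X1 X2] X3] X4] G1] G4] G2] G5] G3] G6])
    then show ?thesis unfolding d e1 e2 e3 e4 .
  qed
qed


lemma delta2_eq: "finite T \<Longrightarrow> {x. Y x \<noteq> 0} \<subseteq> T \<Longrightarrow>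
   delta2 Y = (\<lambda>z. \<Sum>x\<in>T. Y x * delta2_symb x z)"
  unfolding delta2_def by (rule ext, rule sum.mono_neutral_left) auto

lemma symb_sum:
  assumes "finite T" "Some a \<in> T"
  shows "(\<Sum>x\<in>T. symb a x * f x) = f (Some a)"
proof -
  have "(\<Sum>x\<in>T. symb a x * f x) = (\<Sum>x\<in>T. if x = Some a then f x else 0)"
    by (rule sum.cong) (auto simp: symb_def)
  then show ?thesis using assms by simp
qed

theorem lemma2:
  fixes P G1 G2 G3 :: "'a::field poly"
  assumes "lead_coeff P = 1" and "irreducible P" and "degree P \<ge> 1"
    and "\<not> P dvd G1" and "\<not> P dvd G2" and "\<not> P dvd G3"
  shows "in_B (degree P - 1)
           (vadd (vsub (vsub (symb (xP P G1 G2)) (symb (xP P (G1 * G3) G2)))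
                       (symb (xP P G1 G3)))
                 (symb (xP P (G1 * G2) G3)))"
proof -
  define x1 where "x1 = xP P G1 G2"
  define x2 where "x2 = xP P (G1 * G3) G2"
  define x3 where "x3 = xP P G1 G3"
  define x4 where "x4 = xP P (G1 * G2) G3"
  define T where "T = {Some x1, Some x2, Some x3, Some x4}"
  define Y where "Y = symb x1 - symb x2 - symb x3 + symb x4"
  have Yeq: "vadd (vsub (vsub (symb x1) (symb x2)) (symb x3)) (symb x4) = Y"
    unfolding Y_def vadd_eq vsub_eq ..
  have fT: "finite T" unfolding T_def by simp
  have sT: "{x. Y x \<noteq> 0} \<subseteq> T" unfolding T_def Y_def by (auto simp: symb_def)
  define D where "D = (\<lambda>x::'a ratfun. delta2_symb (Some x))"
  have dY: "delta2 Y = D x1 - D x2 - D x3 + D x4"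
  proof (rule ext)
    fix z
    have "delta2 Y z = (\<Sum>x\<in>T. Y x * delta2_symb x z)" using delta2_eq[OF fT sT] by simp
    also have "\<dots> = (\<Sum>x\<in>T. symb x1 x * delta2_symb x z) - (\<Sum>x\<in>T. symb x2 x * delta2_symb x z)
        - (\<Sum>x\<in>T. symb x3 x * delta2_symb x z) + (\<Sum>x\<in>T. symb x4 x * delta2_symb x z)"
      unfolding Y_def by (simp add: algebra_simps sum.distrib sum_subtractf)
    also have "\<dots> = (D x1 - D x2 - D x3 + D x4) z"
      using fT by (simp add: symb_sum T_def D_def)
    finally show "delta2 Y z = (D x1 - D x2 - D x3 + D x4) z" .
  qed
  have pr: "prime_elem P" using assms(2) by (rule field_poly_irreducible_imp_prime)
  have n12: "\<not> P dvd G1 * G2" and n13: "\<not> P dvd G1 * G3"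
    using pr assms(4-6) prime_elem_dvd_mult_iff by blast+
  define w where "w = (\<lambda>u. wedge (to_fract (u mod P)) (to_fract P))"
  let ?A = "wedge_rels \<union> gens (degree P - 1)"
  have S1: "D x1 - (w G1 + w G2 - w (G1*G2)) \<in> qspan ?A"
    using sym_lemma[OF assms(2,4,5)] unfolding D_def x1_def w_def .
  have S2: "D x2 - (w (G1*G3) + w G2 - w (G1*G3*G2)) \<in> qspan ?A"
    using sym_lemma[OF assms(2) n13 assms(5)] unfolding D_def x2_def w_def .
  have S3: "D x3 - (w G1 + w G3 - w (G1*G3)) \<in> qspan ?A"
    using sym_lemma[OF assms(2,4,6)] unfolding D_def x3_def w_def .
  have S4: "D x4 - (w (G1*G2) + w G3 - w (G1*G2*G3)) \<in> qspan ?A"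
    using sym_lemma[OF assms(2) n12 assms(6)] unfolding D_def x4_def w_def .
  have c: "G1*G3*G2 = G1*G2*G3" by (simp add: ac_simps)
  have eq: "D x1 - D x2 - D x3 + D x4 =
     (D x1 - (w G1 + w G2 - w (G1*G2))) - (D x2 - (w (G1*G3) + w G2 - w (G1*G3*G2)))
     - (D x3 - (w G1 + w G3 - w (G1*G3))) + (D x4 - (w (G1*G2) + w G3 - w (G1*G2*G3)))"
    unfolding c by (simp add: algebra_simps)
  have "delta2 Y \<in> qspan ?A" unfolding dY eq by (rule qs_add[OF qs_diff[OF qs_diff[OF S1 S2] S3] S4])
  then have "in_wedge2_V (degree P - 1) (delta2 Y)"
    unfolding in_wedge2_V_def gens_def .
  then show ?thesis unfolding x1_def[symmetric] x2_def[symmetric] x3_def[symmetric]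
      x4_def[symmetric] Yeq in_B_def using fT sT finite_subset by blast
qed

end
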